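(* Let $D$ be a lower bounded distributive lattice. Then the module of motives $M(D)$ is a free abelian group.
   Context: A lower bounded distributive lattice is a distributive lattice with a bottom element $0$ (no top element required). Its module of motives $M(D)$ is the free abelian group $\mathbb{Z}[D]$ modulo the relations $[0]=0$ and $[U]+[V]=[U\vee V]+[U\wedge V]$ for all $U,V\in D$. *)

theory Defs
  imports "HOL-Algebra.Free_Abelian_Groups" "HOL-Algebra.Coset" "HOL-Algebra.Generated_Groups"
begin

text \<open>The lower bounded distributive lattice D is modelled as a type of class
  distrib_lattice + order_bot (carrier = the whole type, 0 = bot).\<close>

definition motive_relations :: "('a::{distrib_lattice,order_bot} \<Rightarrow>\<^sub>0 int) set" where
  "motive_relations =
     {frag_of bot} \<union>
     {frag_of U + frag_of V - frag_of (sup U V) - frag_of (inf U V) | U V. True}"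

definition module_of_motives ::
  "('a::{distrib_lattice,order_bot} \<Rightarrow>\<^sub>0 int) set monoid" where
  "module_of_motives =
     free_Abelian_group (UNIV::'a set) Mod
       generate (free_Abelian_group (UNIV::'a set)) motive_relations"

definition free_abelian :: "('b, 'c) monoid_scheme \<Rightarrow> bool" where
  "free_abelian G \<longleftrightarrow> comm_group G \<and> (\<exists>B \<subseteq> carrier G. G \<cong> free_Abelian_group B)"

end

theory Submission
  imports Defs "HOL-Library.Multiset_Order"
begin

typedef 'a wo = "UNIV :: 'a set" by simp

definition WOr :: "'a rel" where "WOr = (SOME r. well_order_on UNIV r)"

lemma WOr: "well_order_on UNIV (WOr :: 'a rel)"
  unfolding WOr_def by (rule someI_ex[OF well_order_on])

lemma WOr_lin: "linear_order_on UNIV (WOr::'a rel)" and WOr_wf: "wf ((WOr::'a rel) - Id)"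
  using WOr unfolding well_order_on_def by auto

lemma WOr_facts:
  "(x,x) \<in> (WOr::'a rel)"
  "(x,y) \<in> (WOr::'a rel) \<Longrightarrow> (y,z) \<in> WOr \<Longrightarrow> (x,z) \<in> WOr"
  "(x,y) \<in> (WOr::'a rel) \<Longrightarrow> (y,x) \<in> WOr \<Longrightarrow> x = y"
  "(x,y) \<in> (WOr::'a rel) \<or> (y,x) \<in> WOr"
  "wf ((WOr::'a rel) - Id)"
proof -
  have po: "partial_order_on UNIV (WOr::'a rel)" and tot: "total_on UNIV (WOr::'a rel)"
    using WOr_lin unfolding linear_order_on_def by auto
  have rf: "refl_on UNIV (WOr::'a rel)" and tr: "trans (WOr::'a rel)" and an: "antisym (WOr::'a rel)"
    using po unfolding partial_order_on_def preorder_on_def by auto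
  show "(x,x) \<in> (WOr::'a rel)" using rf by (simp add: refl_on_def)
  show "(x,y) \<in> (WOr::'a rel) \<Longrightarrow> (y,z) \<in> WOr \<Longrightarrow> (x,z) \<in> WOr" using tr by (meson transD)
  show "(x,y) \<in> (WOr::'a rel) \<Longrightarrow> (y,x) \<in> WOr \<Longrightarrow> x = y" using an by (meson antisymD)
  show "(x,y) \<in> (WOr::'a rel) \<or> (y,x) \<in> WOr" using tot rf unfolding total_on_def refl_on_def by (cases "x = y") auto
  show "wf ((WOr::'a rel) - Id)" by (rule WOr_wf)
qed

instantiation wo :: (type) wellorder
begin
definition less_eq_wo :: "'a wo \<Rightarrow> 'a wo \<Rightarrow> bool" where
  "less_eq_wo x y \<longleftrightarrow> (Rep_wo x, Rep_wo y) \<in> WOr"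
definition less_wo :: "'a wo \<Rightarrow> 'a wo \<Rightarrow> bool" where
  "less_wo x y \<longleftrightarrow> (Rep_wo x, Rep_wo y) \<in> WOr \<and> x \<noteq> y"
instance
proof
  fix x y z :: "'a wo"
  show "(x < y) = (x \<le> y \<and> \<not> y \<le> x)"
    unfolding less_eq_wo_def less_wo_def using WOr_facts(3)[of "Rep_wo x" "Rep_wo y"] Rep_wo_inject[of x y] by auto
  show "x \<le> x" unfolding less_eq_wo_def by (rule WOr_facts(1))
  show "x \<le> y \<Longrightarrow> y \<le> z \<Longrightarrow> x \<le> z" unfolding less_eq_wo_def by (rule WOr_facts(2))
  show "x \<le> y \<Longrightarrow> y \<le> x \<Longrightarrow> x = y" unfolding less_eq_wo_def using WOr_facts(3)[of "Rep_wo x" "Rep_wo y"] Rep_wo_inject[of x y] by auto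
  show "x \<le> y \<or> y \<le> x" unfolding less_eq_wo_def by (rule WOr_facts(4))
next
  fix P :: "'a wo \<Rightarrow> bool" and a :: "'a wo"
  assume step: "\<And>x. (\<And>y. y < x \<Longrightarrow> P y) \<Longrightarrow> P x"
  have "wf (inv_image ((WOr::'a rel) - Id) Rep_wo)" by (rule wf_inv_image[OF WOr_facts(5)])
  then show "P a"
  proof (induction a rule: wf_induct_rule)
    case (less x)
    show ?case
    proof (rule step)
      fix y assume "y < x"
      then have "(y, x) \<in> inv_image ((WOr::'a rel) - Id) Rep_wo"
        unfolding less_wo_def by (simp add: Rep_wo_inject)
      then show "P y" by (rule less)
    qed
  qed
qed
end

definition lexl :: "'b::linorder set \<Rightarrow> 'b set \<Rightarrow> bool" where
  "lexl T U \<longleftrightarrow> mset_set T < mset_set U"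

definition ee :: "'b set \<Rightarrow> 'b set \<Rightarrow> int" where
  "ee T S = (if T \<subseteq> S then 1 else 0)"

definition Ilt :: "'b::linorder set \<Rightarrow> 'b set \<Rightarrow> 'b set set" where
  "Ilt J U = {T. T \<subseteq> J \<and> lexl T U}"

lemma lexl_irrefl: "\<not> lexl T T"
  by (simp add: lexl_def)

lemma lexl_ins_lt:
  assumes "finite T" "finite U'" "\<forall>t\<in>T. t < k" "\<forall>u\<in>U'. u < k"
  shows "lexl T (insert k U')"
  unfolding lexl_def
proof (rule ex_gt_count_imp_le_multiset[where x = k])
  show "\<forall>y. y \<in># mset_set T + mset_set (insert k U') \<longrightarrow> y \<le> k"
    using assms by (auto simp: less_imp_le)
  show "count (mset_set T) k < count (mset_set (insert k U')) k"
    using assms by (auto simp: count_mset_set)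
qed

lemma lexl_ins_ins:
  assumes "finite T'" "finite U'" "k \<notin> T'" "k \<notin> U'"
  shows "lexl (insert k T') (insert k U') \<longleftrightarrow> lexl T' U'"
  using assms by (simp add: lexl_def)

lemma ee_ins_notin: "k \<notin> S \<Longrightarrow> ee (insert k T) S = 0"
  by (simp add: ee_def)

lemma ee_remove: "k \<notin> T \<Longrightarrow> ee T (S - {k}) = ee T S"
  by (auto simp: ee_def)

lemma ee_ins_ins: "k \<notin> T \<Longrightarrow> k \<in> S \<Longrightarrow> ee (insert k T) S = ee T (S - {k})"
  by (auto simp: ee_def)

lemma inj_insert_on: "(\<And>T. T\<in>A \<Longrightarrow> k\<notin>T) \<Longrightarrow> inj_on (insert k) A"
  unfolding inj_on_def by (metis Diff_insert_absorb)

lemma sum_Pow_insert: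
  assumes "finite J'" "k \<notin> J'"
  shows "(\<Sum>T\<in>Pow (insert k J'). F T) = (\<Sum>T\<in>Pow J'. F T) + (\<Sum>T\<in>Pow J'. F (insert k T))"
proof -
  have inj: "inj_on (insert k) (Pow J')"
    using assms(2) by (intro inj_insert_on) auto
  have disj: "Pow J' \<inter> insert k ` Pow J' = {}" using assms(2) by auto
  have "(\<Sum>T\<in>Pow (insert k J'). F T) = (\<Sum>T\<in>Pow J' \<union> insert k ` Pow J'. F T)"
    by (simp add: Pow_insert)
  also have "\<dots> = (\<Sum>T\<in>Pow J'. F T) + (\<Sum>T\<in>insert k ` Pow J'. F T)"
    using assms(1) disj by (intro sum.union_disjoint) auto
  also have "(\<Sum>T\<in>insert k ` Pow J'. F T) = (\<Sum>T\<in>Pow J'. F (insert k T))"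
    using inj by (simp add: sum.reindex)
  finally show ?thesis .
qed

lemma Ilt_notin:
  assumes "finite J'" "\<forall>j\<in>J'. j < k" "k \<notin> U" "U \<subseteq> insert k J'"
  shows "Ilt (insert k J') U = Ilt J' U"
proof -
  have "\<not> lexl T U" if "T \<subseteq> insert k J'" "k \<in> T" for T
  proof
    assume l: "lexl T U"
    have "U \<subseteq> J'" using assms by auto
    have fin: "finite (T - {k})" "finite U"
      using assms(1) that(1) \<open>U \<subseteq> J'\<close> by (meson finite_Diff finite_insert finite_subset)+
    have "lexl U (insert k (T - {k}))"
      by (rule lexl_ins_lt) (use fin assms that \<open>U \<subseteq> J'\<close> in auto)
    then have "lexl U T" using that by (simp add: insert_absorb)
    with l show False unfolding lexl_def by auto
  qed
  then show ?thesis unfolding Ilt_def by blast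
qed

lemma Ilt_in_sum:
  assumes "finite J'" "\<forall>j\<in>J'. j < k" "U' \<subseteq> J'"
  shows "(\<Sum>T\<in>Ilt (insert k J') (insert k U'). F T) = (\<Sum>T\<in>Pow J'. F T) + (\<Sum>T\<in>Ilt J' U'. F (insert k T))"
proof -
  have kJ: "k \<notin> J'" using assms(2) by auto
  have kU: "k \<notin> U'" using assms kJ by auto
  have finU: "finite U'" using assms(1,3) by (rule finite_subset[rotated])
  have eq: "Ilt (insert k J') (insert k U') = Pow J' \<union> insert k ` Ilt J' U'"
  proof (rule Set.set_eqI)
    fix T
    show "T \<in> Ilt (insert k J') (insert k U') \<longleftrightarrow> T \<in> Pow J' \<union> insert k ` Ilt J' U'"
    proof (cases "k \<in> T")
      case True
      have "T = insert k (T - {k})" using True by auto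
      have finT: "finite (T - {k})" if "T \<subseteq> insert k J'" using that assms(1) by (meson finite_Diff finite_insert finite_subset)
      show ?thesis
      proof
        assume "T \<in> Ilt (insert k J') (insert k U')"
        then have T: "T \<subseteq> insert k J'" "lexl T (insert k U')" unfolding Ilt_def by auto
        then have "lexl (T - {k}) U'"
          using lexl_ins_ins[of "T - {k}" U' k] finT finU kU \<open>T = insert k (T - {k})\<close> by auto
        then have "T - {k} \<in> Ilt J' U'" using T unfolding Ilt_def by auto
        then show "T \<in> Pow J' \<union> insert k ` Ilt J' U'" using \<open>T = insert k (T - {k})\<close> by blast
      next
        assume "T \<in> Pow J' \<union> insert k ` Ilt J' U'"
        then obtain T' where T': "T' \<in> Ilt J' U'" "T = insert k T'" using True kJ by auto
        then have "T' \<subseteq> J'" "lexl T' U'" unfolding Ilt_def by auto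
        moreover have "finite T'" using \<open>T' \<subseteq> J'\<close> assms(1) by (rule finite_subset)
        ultimately have "lexl T (insert k U')" using T' lexl_ins_ins[of T' U' k] finU kU kJ by auto
        then show "T \<in> Ilt (insert k J') (insert k U')" using T' \<open>T' \<subseteq> J'\<close> unfolding Ilt_def by auto
      qed
    next
      case False
      show ?thesis
      proof
        assume "T \<in> Ilt (insert k J') (insert k U')"
        then show "T \<in> Pow J' \<union> insert k ` Ilt J' U'" using False unfolding Ilt_def by auto
      next
        assume "T \<in> Pow J' \<union> insert k ` Ilt J' U'"
        then have "T \<subseteq> J'" using False by auto
        then have "lexl T (insert k U')"
          using lexl_ins_lt[of T U' k] finite_subset[OF \<open>T \<subseteq> J'\<close> assms(1)] finU assms(2,3) by auto
        then show "T \<in> Ilt (insert k J') (insert k U')" using \<open>T \<subseteq> J'\<close> unfolding Ilt_def by auto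
      qed
    qed
  qed
  have inj: "inj_on (insert k) (Ilt J' U')"
    using kJ unfolding Ilt_def by (intro inj_insert_on) auto
  have disj: "Pow J' \<inter> insert k ` Ilt J' U' = {}" using kJ by auto
  have finI: "finite (Ilt J' U')" using assms(1) unfolding Ilt_def by auto
  have "(\<Sum>T\<in>Ilt (insert k J') (insert k U'). F T) = (\<Sum>T\<in>Pow J'. F T) + (\<Sum>T\<in>insert k ` Ilt J' U'. F T)"
    unfolding eq using assms(1) disj finI by (intro sum.union_disjoint) auto
  also have "(\<Sum>T\<in>insert k ` Ilt J' U'. F T) = (\<Sum>T\<in>Ilt J' U'. F (insert k T))"
    using inj by (simp add: sum.reindex)
  finally show ?thesis .
qed

lemma full_span:
  assumes "finite J"
  shows "\<exists>a. \<forall>S\<subseteq>J. h S = (\<Sum>T\<in>Pow J. a T * ee T S)"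
  using assms
proof (induction J arbitrary: h rule: finite_induct)
  case empty
  show ?case by (rule exI[of _ "\<lambda>T. h {}"]) (auto simp: ee_def)
next
  case (insert k J')
  obtain a0 where a0: "\<forall>S\<subseteq>J'. h S = (\<Sum>T\<in>Pow J'. a0 T * ee T S)"
    using insert.IH by blast
  obtain a1 where a1: "\<forall>S\<subseteq>J'. h (insert k S) - h S = (\<Sum>T\<in>Pow J'. a1 T * ee T S)"
    using insert.IH[of "\<lambda>S. h (insert k S) - h S"] by blast
  define a where "a T = (if k \<in> T then a1 (T - {k}) else a0 T)" for T
  show ?case
  proof (intro exI allI impI)
    fix S assume S: "S \<subseteq> insert k J'"
    have S': "S - {k} \<subseteq> J'" using S by auto
    have s1: "(\<Sum>T\<in>Pow J'. a T * ee T S) = (\<Sum>T\<in>Pow J'. a0 T * ee T (S - {k}))"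
      by (rule sum.cong) (use insert.hyps in \<open>auto simp: a_def ee_remove\<close>)
    have s2: "(\<Sum>T\<in>Pow J'. a (insert k T) * ee (insert k T) S)
          = (if k \<in> S then (\<Sum>T\<in>Pow J'. a1 T * ee T (S - {k})) else 0)"
    proof (cases "k \<in> S")
      case True
      have "a (insert k T) * ee (insert k T) S = a1 T * ee T (S - {k})" if "T \<in> Pow J'" for T
      proof -
        have kT: "k \<notin> T" using that insert.hyps by auto
        then have "insert k T - {k} = T" by auto
        then show ?thesis using kT True by (simp add: a_def ee_ins_ins)
      qed
      then have "(\<Sum>T\<in>Pow J'. a (insert k T) * ee (insert k T) S) = (\<Sum>T\<in>Pow J'. a1 T * ee T (S - {k}))"
        by (rule sum.cong[OF refl])
      then show ?thesis using True by simp
    next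
      case False
      then show ?thesis by (simp add: ee_ins_notin)
    qed
    have "(\<Sum>T\<in>Pow (insert k J'). a T * ee T S) = (\<Sum>T\<in>Pow J'. a T * ee T S) + (\<Sum>T\<in>Pow J'. a (insert k T) * ee (insert k T) S)"
      by (rule sum_Pow_insert) (use insert.hyps in auto)
    also have "\<dots> = h S"
    proof (cases "k \<in> S")
      case True
      then have SS: "insert k (S - {k}) = S" by auto
      have e1: "h (S - {k}) = (\<Sum>T\<in>Pow J'. a0 T * ee T (S - {k}))" using a0 S' by blast
      have e2: "h (insert k (S - {k})) - h (S - {k}) = (\<Sum>T\<in>Pow J'. a1 T * ee T (S - {k}))"
        using a1 S' by blast
      then have e2': "h S - h (S - {k}) = (\<Sum>T\<in>Pow J'. a1 T * ee T (S - {k}))" by (simp only: SS)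
      have s2': "(\<Sum>T\<in>Pow J'. a (insert k T) * ee (insert k T) S) = (\<Sum>T\<in>Pow J'. a1 T * ee T (S - {k}))"
        using s2 True by simp
      show ?thesis using s1 s2' e1 e2' by linarith
    next
      case False
      then have "S - {k} = S" by auto
      then show ?thesis using s1 s2 a0 S' False by simp
    qed
    finally show "h S = (\<Sum>T\<in>Pow (insert k J'). a T * ee T S)" by simp
  qed
qed

lemma purity:
  assumes "finite J"
  shows "\<forall>X U n f c. X \<subseteq> Pow J \<longrightarrow> U \<subseteq> J \<longrightarrow> n \<noteq> (0::int) \<longrightarrow>
     (\<forall>S\<in>X. n * f S = (\<Sum>T\<in>Ilt J U. c T * ee T S)) \<longrightarrow>
     (\<exists>c'. \<forall>S\<in>X. f S = (\<Sum>T\<in>Ilt J U. c' T * ee T S))"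
  using assms
proof (induction J rule: finite_linorder_max_induct)
  case empty
  show ?case
  proof (intro allI impI)
    fix X U n f c
    assume X: "X \<subseteq> Pow ({}::'a set)" and U: "U \<subseteq> {}" and n: "n \<noteq> (0::int)"
      and h: "\<forall>S\<in>X. n * f S = (\<Sum>T\<in>Ilt {} U. c T * ee T S)"
    have "Ilt {} U = {}" using U unfolding Ilt_def by (auto simp: lexl_irrefl)
    then show "\<exists>c'. \<forall>S\<in>X. f S = (\<Sum>T\<in>Ilt {} U. c' T * ee T S)" using h n by simp
  qed
next
  case (insert k J')
  have kJ: "k \<notin> J'" using insert.hyps by auto
  show ?case
  proof (intro allI impI)
    fix X U n f c
    assume X: "X \<subseteq> Pow (insert k J')" and U: "U \<subseteq> insert k J'" and n: "n \<noteq> (0::int)"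
      and h: "\<forall>S\<in>X. n * f S = (\<Sum>T\<in>Ilt (insert k J') U. c T * ee T S)"
    show "\<exists>c'. \<forall>S\<in>X. f S = (\<Sum>T\<in>Ilt (insert k J') U. c' T * ee T S)"
    proof (cases "k \<in> U")
      case False
      have IltU: "Ilt (insert k J') U = Ilt J' U"
        by (rule Ilt_notin) (use insert.hyps False U in auto)
      have UJ: "U \<subseteq> J'" using U False by auto
      have eeS: "ee T (S - {k}) = ee T S" if "T \<in> Ilt J' U" for T S
      proof -
        have "k \<notin> T" using that kJ unfolding Ilt_def by auto
        then show ?thesis by (simp add: ee_remove)
      qed
      define X' where "X' = (\<lambda>S. S - {k}) ` X"
      define f' where "f' S' = f (SOME S. S \<in> X \<and> S - {k} = S')" for S'
      have X': "X' \<subseteq> Pow J'" using X unfolding X'_def by auto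
      have sumS: "(\<Sum>T\<in>Ilt J' U. d T * ee T (S - {k})) = (\<Sum>T\<in>Ilt J' U. d T * ee T S)" for d S
        by (rule sum.cong[OF refl]) (simp add: eeS)
      have hS: "n * f S = (\<Sum>T\<in>Ilt J' U. c T * ee T (S - {k}))" if "S \<in> X" for S
        using h that by (simp add: IltU sumS)
      have some: "(SOME S1. S1 \<in> X \<and> S1 - {k} = S - {k}) \<in> X \<and> (SOME S1. S1 \<in> X \<and> S1 - {k} = S - {k}) - {k} = S - {k}"
        if "S \<in> X" for S
        by (rule someI_ex) (use that in blast)
      have f'S: "f' (S - {k}) = f S" if "S \<in> X" for S
      proof -
        let ?S1 = "SOME S1. S1 \<in> X \<and> S1 - {k} = S - {k}"
        have "n * f ?S1 = n * f S" using hS[of ?S1] hS[of S] some[OF that] that by simp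
        then show ?thesis using n unfolding f'_def by simp
      qed
      have "\<forall>S'\<in>X'. n * f' S' = (\<Sum>T\<in>Ilt J' U. c T * ee T S')"
      proof
        fix S' assume "S' \<in> X'"
        then obtain S where S: "S \<in> X" "S' = S - {k}" unfolding X'_def by blast
        show "n * f' S' = (\<Sum>T\<in>Ilt J' U. c T * ee T S')"
          unfolding S(2) f'S[OF S(1)] by (rule hS[OF S(1)])
      qed
      then obtain c' where c': "\<forall>S'\<in>X'. f' S' = (\<Sum>T\<in>Ilt J' U. c' T * ee T S')"
        using insert.IH[rule_format, OF X' UJ n] by blast
      show ?thesis
      proof (intro exI ballI)
        fix S assume S: "S \<in> X"
        have "f S = f' (S - {k})" using f'S S by simp
        also have "\<dots> = (\<Sum>T\<in>Ilt J' U. c' T * ee T (S - {k}))" using c' S unfolding X'_def by blast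
        also have "\<dots> = (\<Sum>T\<in>Ilt (insert k J') U. c' T * ee T S)" by (simp add: IltU sumS)
        finally show "f S = (\<Sum>T\<in>Ilt (insert k J') U. c' T * ee T S)" .
      qed
    next
      case True
      define U' where "U' = U - {k}"
      have UU: "U = insert k U'" using True unfolding U'_def by auto
      have U'J: "U' \<subseteq> J'" using U unfolding U'_def by auto
      have kU': "k \<notin> U'" unfolding U'_def by auto
      have split: "(\<Sum>T\<in>Ilt (insert k J') U. F T) = (\<Sum>T\<in>Pow J'. F T) + (\<Sum>T\<in>Ilt J' U'. F (insert k T))" for F
        unfolding UU by (rule Ilt_in_sum) (use insert.hyps U'J in auto)
      have kT: "k \<notin> T" if "T \<in> Ilt J' U'" for T using that kJ unfolding Ilt_def by auto
      have kT2: "k \<notin> T" if "T \<in> Pow J'" for T using that kJ by auto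
      have ev0: "(\<Sum>T\<in>Ilt (insert k J') U. d T * ee T S) = (\<Sum>T\<in>Pow J'. d T * ee T S)"
        if "k \<notin> S" for d S
        using that by (simp add: split ee_ins_notin)
      have ev1: "(\<Sum>T\<in>Ilt (insert k J') U. d T * ee T S) =
          (\<Sum>T\<in>Pow J'. d T * ee T (S - {k})) + (\<Sum>T\<in>Ilt J' U'. d (insert k T) * ee T (S - {k}))"
        if "k \<in> S" for d S
      proof -
        have "(\<Sum>T\<in>Pow J'. d T * ee T S) = (\<Sum>T\<in>Pow J'. d T * ee T (S - {k}))"
          by (rule sum.cong[OF refl]) (simp add: ee_remove kT2)
        moreover have "(\<Sum>T\<in>Ilt J' U'. d (insert k T) * ee (insert k T) S) = (\<Sum>T\<in>Ilt J' U'. d (insert k T) * ee T (S - {k}))"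
          by (rule sum.cong[OF refl]) (simp add: ee_ins_ins kT that)
        ultimately show ?thesis by (simp add: split)
      qed
      define X0 where "X0 = {S\<in>X. k \<notin> S}"
      define X1 where "X1 = (\<lambda>S. S - {k}) ` {S\<in>X. k \<in> S}"
      define C where "C = X0 \<inter> X1"
      define g where "g S' = f (insert k S') - f S'" for S'
      have CJ: "C \<subseteq> Pow J'" unfolding C_def X0_def using X by auto
      have Cins: "insert k S' \<in> X" "S' \<in> X" "k \<notin> S'" if "S' \<in> C" for S'
      proof -
        from that obtain S where S: "S \<in> X" "k \<in> S" "S' = S - {k}" unfolding C_def X1_def by auto
        then have "insert k S' = S" by auto
        then show "insert k S' \<in> X" using S by simp
        show "S' \<in> X" "k \<notin> S'" using that unfolding C_def X0_def by auto
      qed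
      have "\<forall>S'\<in>C. n * g S' = (\<Sum>T\<in>Ilt J' U'. c (insert k T) * ee T S')"
      proof
        fix S' assume S': "S' \<in> C"
        have a: "n * f (insert k S') = (\<Sum>T\<in>Pow J'. c T * ee T S') + (\<Sum>T\<in>Ilt J' U'. c (insert k T) * ee T S')"
          using h Cins[OF S'] ev1[of "insert k S'" c] by simp
        have b: "n * f S' = (\<Sum>T\<in>Pow J'. c T * ee T S')"
          using h Cins[OF S'] ev0[of S' c] by simp
        show "n * g S' = (\<Sum>T\<in>Ilt J' U'. c (insert k T) * ee T S')"
          using a b unfolding g_def by (simp add: right_diff_distrib)
      qed
      then obtain b' where b': "\<forall>S'\<in>C. g S' = (\<Sum>T\<in>Ilt J' U'. b' T * ee T S')"
        using insert.IH[rule_format, OF CJ U'J n, of g "\<lambda>T. c (insert k T)"] by blast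
      define B' where "B' S' = (\<Sum>T\<in>Ilt J' U'. b' T * ee T S')" for S'
      define hh where "hh S' = (if S' \<in> X0 then f S' else f (insert k S') - B' S')" for S'
      obtain a' where a': "\<forall>S'\<subseteq>J'. hh S' = (\<Sum>T\<in>Pow J'. a' T * ee T S')"
        using full_span[OF insert.hyps(1)] by blast
      define c'' where "c'' T = (if k \<in> T then b' (T - {k}) else a' T)" for T
      have c''1: "c'' T = a' T" if "T \<in> Pow J'" for T using kT2[OF that] by (simp add: c''_def)
      have c''2: "c'' (insert k T) = b' T" if "T \<in> Ilt J' U'" for T
        using kT[OF that] by (simp add: c''_def)
      have sc1: "(\<Sum>T\<in>Pow J'. c'' T * ee T Z) = (\<Sum>T\<in>Pow J'. a' T * ee T Z)" for Z
        by (rule sum.cong[OF refl]) (simp add: c''1)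
      have sc2: "(\<Sum>T\<in>Ilt J' U'. c'' (insert k T) * ee T Z) = (\<Sum>T\<in>Ilt J' U'. b' T * ee T Z)" for Z
        by (rule sum.cong[OF refl]) (simp add: c''2)
      show ?thesis
      proof (intro exI ballI)
        fix S assume S: "S \<in> X"
        show "f S = (\<Sum>T\<in>Ilt (insert k J') U. c'' T * ee T S)"
        proof (cases "k \<in> S")
          case False
          then have "S \<subseteq> J'" using S X by auto
          have "(\<Sum>T\<in>Ilt (insert k J') U. c'' T * ee T S) = (\<Sum>T\<in>Pow J'. a' T * ee T S)"
            using ev0[OF False, of c''] by (simp add: sc1)
          also have "\<dots> = hh S" using a' \<open>S \<subseteq> J'\<close> by simp
          also have "\<dots> = f S" using S False unfolding hh_def X0_def by simp
          finally show ?thesis by simp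
        next
          case True
          define S' where "S' = S - {k}"
          have SS: "S = insert k S'" using True unfolding S'_def by auto
          have S'J: "S' \<subseteq> J'" using S X unfolding S'_def by auto
          have S'X1: "S' \<in> X1" using S True unfolding X1_def S'_def by auto
          have "(\<Sum>T\<in>Ilt (insert k J') U. c'' T * ee T S) = (\<Sum>T\<in>Pow J'. a' T * ee T S') + B' S'"
            using ev1[OF True, of c''] unfolding S'_def B'_def
            by (simp only: sc1 sc2)
          also have "\<dots> = hh S' + B' S'" using a' S'J by simp
          also have "\<dots> = f S"
          proof (cases "S' \<in> X0")
            case True
            then have "S' \<in> C" using S'X1 unfolding C_def by simp
            then have "B' S' = g S'" using b' unfolding B'_def by simp
            then show ?thesis using True SS unfolding hh_def g_def by simp
          next
            case False
            then show ?thesis using SS unfolding hh_def by simp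
          qed
          finally show ?thesis by simp
        qed
      qed
    qed
  qed
qed

section \<open>Prime filters\<close>

definition pfilter :: "'a::{distrib_lattice,order_bot} set \<Rightarrow> bool" where
  "pfilter G \<longleftrightarrow> (\<forall>x y. x \<in> G \<longrightarrow> x \<le> y \<longrightarrow> y \<in> G) \<and> (\<forall>x y. x \<in> G \<longrightarrow> y \<in> G \<longrightarrow> inf x y \<in> G)
     \<and> (\<forall>x y. sup x y \<in> G \<longrightarrow> x \<in> G \<or> y \<in> G) \<and> bot \<notin> G"

lemma pfilter_inf_iff: "pfilter G \<Longrightarrow> inf x y \<in> G \<longleftrightarrow> x \<in> G \<and> y \<in> G"
  unfolding pfilter_def by (meson inf.cobounded1 inf.cobounded2)

lemma pfilter_sup_iff: "pfilter G \<Longrightarrow> sup x y \<in> G \<longleftrightarrow> x \<in> G \<or> y \<in> G"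
  unfolding pfilter_def by (meson sup.cobounded1 sup.cobounded2)

lemma pfilter_bot: "pfilter G \<Longrightarrow> bot \<notin> G"
  unfolding pfilter_def by blast

lemma pfilter_up: "pfilter G \<Longrightarrow> x \<in> G \<Longrightarrow> x \<le> y \<Longrightarrow> y \<in> G"
  unfolding pfilter_def by blast

lemma pf_exists:
  fixes a b :: "'a::{distrib_lattice,order_bot}"
  assumes ab: "\<not> a \<le> b"
  shows "\<exists>G. pfilter G \<and> a \<in> G \<and> b \<notin> G"
proof -
  define A where "A = {F::'a set. (\<forall>x y. x \<in> F \<longrightarrow> x \<le> y \<longrightarrow> y \<in> F) \<and>
       (\<forall>x y. x \<in> F \<longrightarrow> y \<in> F \<longrightarrow> inf x y \<in> F) \<and> a \<in> F \<and> b \<notin> F}"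
  have "{x. a \<le> x} \<in> A" using ab unfolding A_def by auto
  then have ne: "A \<noteq> {}" by blast
  have ch: "\<Union>C \<in> A" if "C \<noteq> {}" "subset.chain A C" for C
  proof -
    have CA: "C \<subseteq> A" and lin: "\<forall>X\<in>C. \<forall>Y\<in>C. X \<subseteq> Y \<or> Y \<subseteq> X"
      using that(2) by (auto simp: subset_chain_def)
    have up: "y \<in> \<Union>C" if "x \<in> \<Union>C" "x \<le> y" for x y
    proof -
      from that obtain F where "F \<in> C" "x \<in> F" by blast
      then have "y \<in> F" using CA that(2) unfolding A_def by blast
      then show ?thesis using \<open>F \<in> C\<close> by blast
    qed
    have mt: "inf x y \<in> \<Union>C" if "x \<in> \<Union>C" "y \<in> \<Union>C" for x y
    proof -
      from that obtain F1 F2 where F: "F1 \<in> C" "x \<in> F1" "F2 \<in> C" "y \<in> F2" by blast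
      then have "F1 \<subseteq> F2 \<or> F2 \<subseteq> F1" using lin by blast
      then show ?thesis
      proof
        assume "F1 \<subseteq> F2"
        then have "inf x y \<in> F2" using F CA unfolding A_def by blast
        then show ?thesis using F by blast
      next
        assume "F2 \<subseteq> F1"
        then have "inf x y \<in> F1" using F CA unfolding A_def by blast
        then show ?thesis using F by blast
      qed
    qed
    have "a \<in> \<Union>C" using that(1) CA unfolding A_def by blast
    moreover have "b \<notin> \<Union>C" using CA unfolding A_def by blast
    ultimately show ?thesis unfolding A_def using up mt by blast
  qed
  obtain M where M: "M \<in> A" and max: "\<forall>X\<in>A. M \<subseteq> X \<longrightarrow> X = M"
    using subset_Zorn_nonempty[OF ne ch] by blast
  have Mup: "\<And>x y. x \<in> M \<Longrightarrow> x \<le> y \<Longrightarrow> y \<in> M" and Minf: "\<And>x y. x \<in> M \<Longrightarrow> y \<in> M \<Longrightarrow> inf x y \<in> M"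
    and aM: "a \<in> M" and bM: "b \<notin> M" using M unfolding A_def by blast+
  have key: "\<exists>f\<in>M. inf f x \<le> b" if "x \<notin> M" for x
  proof (rule ccontr)
    assume nb: "\<not> (\<exists>f\<in>M. inf f x \<le> b)"
    define Mx where "Mx = {z. \<exists>f\<in>M. inf f x \<le> z}"
    have "Mx \<in> A" unfolding A_def
    proof (intro CollectI conjI allI impI)
      show "y \<in> Mx" if zM: "z \<in> Mx" and zy: "z \<le> y" for z y
      proof -
        obtain f where f: "f \<in> M" "inf f x \<le> z" using zM unfolding Mx_def by blast
        have "inf f x \<le> y" using f(2) zy by (rule order.trans)
        then show ?thesis using f(1) unfolding Mx_def by blast
      qed
      show "inf z y \<in> Mx" if zM: "z \<in> Mx" and yM: "y \<in> Mx" for z y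
      proof -
        obtain f1 f2 where f: "f1 \<in> M" "inf f1 x \<le> z" "f2 \<in> M" "inf f2 x \<le> y"
          using zM yM unfolding Mx_def by blast
        have "inf (inf f1 f2) x \<le> inf f1 x" by (simp add: inf.coboundedI1 le_infI1)
        moreover have "inf (inf f1 f2) x \<le> inf f2 x" by (simp add: inf.coboundedI1 le_infI2)
        ultimately have "inf (inf f1 f2) x \<le> inf z y" using f(2,4) by (meson le_inf_iff order.trans)
        then show ?thesis using Minf[OF f(1) f(3)] unfolding Mx_def by blast
      qed
      have "inf a x \<le> a" by simp
      then show "a \<in> Mx" using aM unfolding Mx_def by blast
      show "b \<notin> Mx" using nb unfolding Mx_def by blast
    qed
    moreover have "M \<subseteq> Mx"
    proof
      fix z assume "z \<in> M"
      moreover have "inf z x \<le> z" by simp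
      ultimately show "z \<in> Mx" unfolding Mx_def by blast
    qed
    ultimately have "Mx = M" using max by blast
    moreover have "x \<in> Mx"
    proof -
      have "inf a x \<le> x" by simp
      then show ?thesis using aM unfolding Mx_def by blast
    qed
    ultimately show False using that by blast
  qed
  have "pfilter M"
    unfolding pfilter_def
  proof (intro conjI allI impI)
    show "y \<in> M" if "x \<in> M" "x \<le> y" for x y using Mup that by blast
    show "inf x y \<in> M" if "x \<in> M" "y \<in> M" for x y using Minf that by blast
    show "bot \<notin> M"
    proof
      assume "bot \<in> M"
      then have "b \<in> M" using Mup[of bot b] by simp
      then show False using bM by simp
    qed
    show "x \<in> M \<or> y \<in> M" if xy: "sup x y \<in> M" for x y
    proof (rule ccontr)
      assume "\<not> (x \<in> M \<or> y \<in> M)"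
      then obtain f1 f2 where f: "f1 \<in> M" "inf f1 x \<le> b" "f2 \<in> M" "inf f2 y \<le> b"
        using key by blast
      define f where "f = inf f1 f2"
      have fM: "f \<in> M" unfolding f_def using Minf f by blast
      have "inf f (sup x y) = sup (inf f x) (inf f y)" by (rule inf_sup_distrib1)
      also have "\<dots> \<le> b"
      proof (rule sup_least)
        have "inf f x \<le> inf f1 x" unfolding f_def by (simp add: le_infI1)
        then show "inf f x \<le> b" using f(2) by (rule order.trans)
        have "inf f y \<le> inf f2 y" unfolding f_def by (simp add: le_infI1)
        then show "inf f y \<le> b" using f(4) by (rule order.trans)
      qed
      finally have "b \<in> M" using Mup[OF Minf[OF fM xy]] by blast
      then show False using bM by blast
    qed
  qed
  then show ?thesis using aM bM by blast
qed

section \<open>The relation subgroup\<close>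

abbreviation FA :: "('a::{distrib_lattice,order_bot} \<Rightarrow>\<^sub>0 int) monoid" where
  "FA \<equiv> free_Abelian_group (UNIV::'a set)"

definition RR :: "('a::{distrib_lattice,order_bot} \<Rightarrow>\<^sub>0 int) set" where
  "RR = generate FA motive_relations"

lemma RR_subgroup: "subgroup RR FA"
  unfolding RR_def by (rule group.generate_is_subgroup[OF group_free_Abelian_group]) auto

lemma RR_zero: "0 \<in> RR"
  using subgroup.one_closed[OF RR_subgroup] by simp

lemma RR_add: "x \<in> RR \<Longrightarrow> y \<in> RR \<Longrightarrow> x + y \<in> RR"
  using subgroup.m_closed[OF RR_subgroup] by fastforce

lemma RR_uminus: "x \<in> RR \<Longrightarrow> - x \<in> RR"
  using subgroup.m_inv_closed[OF RR_subgroup] by fastforce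

lemma RR_diff: "x \<in> RR \<Longrightarrow> y \<in> RR \<Longrightarrow> x - y \<in> RR"
  using RR_add[OF _ RR_uminus] by (metis diff_conv_add_uminus)

lemma RR_cmul: "x \<in> RR \<Longrightarrow> frag_cmul c x \<in> RR"
proof -
  assume x: "x \<in> RR"
  have "x [^]\<^bsub>FA\<^esub> c \<in> RR"
    by (rule group.subgroup_int_pow_closed[OF group_free_Abelian_group RR_subgroup x])
  then show ?thesis by simp
qed

lemma RR_sum: "(\<And>i. i \<in> I \<Longrightarrow> f i \<in> RR) \<Longrightarrow> sum f I \<in> RR"
proof (induction I rule: infinite_finite_induct)
  case (infinite A) then show ?case by (simp add: RR_zero)
next
  case empty then show ?case by (simp add: RR_zero)
next
  case (insert x F) then show ?case by (simp add: RR_add)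
qed

lemma RR_bot: "frag_of bot \<in> RR"
  unfolding RR_def motive_relations_def by (rule generate.incl) auto

lemma RR_rel: "frag_of U + frag_of V - frag_of (sup U V) - frag_of (inf U V) \<in> RR"
  unfolding RR_def motive_relations_def by (rule generate.incl) auto

section \<open>Valuations from prime filters\<close>

definition ev :: "'a set \<Rightarrow> ('a \<Rightarrow>\<^sub>0 int) \<Rightarrow> int" where
  "ev G z = Poly_Mapping.lookup (frag_extend (\<lambda>d. if d \<in> G then frag_of () else 0) z) ()"

lemma ev_add: "ev G (x + y) = ev G x + ev G y"
  by (simp add: ev_def frag_extend_add lookup_add)

lemma ev_minus: "ev G (- x) = - ev G x"
  by (simp add: ev_def frag_extend_minus lookup_minus)

lemma ev_diff: "ev G (x - y) = ev G x - ev G y"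
  by (simp add: ev_def frag_extend_diff lookup_minus)

lemma ev_cmul: "ev G (frag_cmul c x) = c * ev G x"
  by (simp add: ev_def frag_extend_cmul)

lemma ev_of: "ev G (frag_of d) = (if d \<in> G then 1 else 0)"
  by (simp add: ev_def)

lemma ev_sum: "ev G (sum f I) = (\<Sum>i\<in>I. ev G (f i))"
proof (induction I rule: infinite_finite_induct)
  case (infinite A) then show ?case by (simp add: ev_def)
next
  case empty then show ?case by (simp add: ev_def)
next
  case (insert x F) then show ?case by (simp add: ev_add)
qed

lemma ev_RR:
  assumes G: "pfilter G" and z: "z \<in> RR"
  shows "ev G z = 0"
  using z unfolding RR_def
proof (induction z rule: generate.induct)
  case one
  then show ?case by (simp add: ev_def)
next
  case (incl h)
  then show ?case
  proof (cases "h = frag_of bot")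
    case True
    then show ?thesis using pfilter_bot[OF G] by (simp add: ev_of)
  next
    case False
    then obtain U V where h: "h = frag_of U + frag_of V - frag_of (sup U V) - frag_of (inf U V)"
      using incl unfolding motive_relations_def by blast
    show ?thesis unfolding h using pfilter_inf_iff[OF G, of U V] pfilter_sup_iff[OF G, of U V]
      by (simp add: ev_add ev_diff ev_of)
  qed
next
  case (inv h)
  then show ?case
  proof (cases "h = frag_of bot")
    case True
    then show ?thesis using pfilter_bot[OF G] by (simp add: ev_of ev_minus)
  next
    case False
    then obtain U V where h: "h = frag_of U + frag_of V - frag_of (sup U V) - frag_of (inf U V)"
      using inv unfolding motive_relations_def by blast
    show ?thesis unfolding h using pfilter_inf_iff[OF G, of U V] pfilter_sup_iff[OF G, of U V]
      by (simp add: ev_add ev_diff ev_of ev_minus)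
  qed
next
  case (eng h1 h2)
  then show ?case by (simp add: ev_add)
qed

definition mt :: "'a::{distrib_lattice,order_bot} \<Rightarrow> 'a set \<Rightarrow> 'a" where
  "mt m A = Inf_fin (insert m A)"

lemma mt_eq: "finite A \<Longrightarrow> mt m A = (if A = {} then m else inf m (Inf_fin A))"
  by (simp add: mt_def)

lemma mt_insert: "finite A \<Longrightarrow> mt m (insert x A) = mt (inf m x) A"
  by (cases "A = {}") (simp_all add: mt_eq inf_assoc)

lemma mt_inf: "finite A \<Longrightarrow> mt (inf x y) A = inf (mt x A) (mt y A)"
  by (simp add: mt_eq inf_aci)

lemma mt_sup: "finite A \<Longrightarrow> mt (sup x y) A = sup (mt x A) (mt y A)"
  by (simp add: mt_eq inf_sup_distrib2)

lemma mt_bot: "finite A \<Longrightarrow> mt bot A = bot"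
  by (simp add: mt_eq inf_absorb1)

lemma mt_mem:
  assumes G: "pfilter G" and A: "finite A"
  shows "mt m A \<in> G \<longleftrightarrow> m \<in> G \<and> A \<subseteq> G"
  using A
proof (induction A arbitrary: m rule: finite_induct)
  case empty then show ?case by (simp add: mt_def)
next
  case (insert x F)
  then show ?case using pfilter_inf_iff[OF G] by (simp add: mt_insert)
qed

lemma Inf_fin_mem:
  assumes G: "pfilter G" and A: "finite A" "A \<noteq> {}"
  shows "Inf_fin A \<in> G \<longleftrightarrow> A \<subseteq> G"
proof -
  obtain a where "a \<in> A" using A by blast
  define A' where "A' = A - {a}"
  have "A = insert a A'" "finite A'" using \<open>a \<in> A\<close> A unfolding A'_def by auto
  then have "Inf_fin A = mt a A'" by (simp add: mt_def)
  then show ?thesis using mt_mem[OF G \<open>finite A'\<close>] \<open>A = insert a A'\<close> by simp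
qed

definition pat :: "('b \<Rightarrow> 'a) \<Rightarrow> 'a set \<Rightarrow> 'b set \<Rightarrow> 'b set" where
  "pat g G J = {j\<in>J. g j \<in> G}"

lemma ee_pat: "T \<subseteq> J \<Longrightarrow> ee T (pat g G J) = (if g ` T \<subseteq> G then 1 else 0)"
  by (auto simp: ee_def pat_def)

lemma poly_eq_lookup: "(\<And>k. Poly_Mapping.lookup f k = Poly_Mapping.lookup h k) \<Longrightarrow> f = h"
  by (rule poly_mapping_eqI)

lemma lift:
  fixes g :: "'b \<Rightarrow> 'a::{distrib_lattice,order_bot}"
  assumes "finite J"
  shows "\<forall>m b w. (\<forall>G. pfilter G \<longrightarrow> m \<in> G \<longrightarrow> b \<notin> G \<longrightarrow> (\<Sum>T\<in>Pow J. w T * ee T (pat g G J)) = 0) \<longrightarrow>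
     (\<Sum>T\<in>Pow J. frag_cmul (w T) (frag_of (mt m (g ` T)) - frag_of (mt (inf m b) (g ` T)))) \<in> RR"
  using assms
proof (induction J rule: finite_induct)
  case empty
  show ?case
  proof (intro allI impI)
    fix m b :: 'a and w :: "'b set \<Rightarrow> int"
    assume h: "\<forall>G. pfilter G \<longrightarrow> m \<in> G \<longrightarrow> b \<notin> G \<longrightarrow> (\<Sum>T\<in>Pow {}. w T * ee T (pat g G {})) = 0"
    show "(\<Sum>T\<in>Pow {}. frag_cmul (w T) (frag_of (mt m (g ` T)) - frag_of (mt (inf m b) (g ` T)))) \<in> RR"
    proof (cases "m \<le> b")
      case True
      then have "inf m b = m" by (simp add: inf_absorb1)
      then show ?thesis by (simp add: RR_zero)
    next
      case False
      then obtain G where G: "pfilter G" "m \<in> G" "b \<notin> G" using pf_exists by blast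
      then have "w {} = 0" using h by (simp add: ee_def)
      then show ?thesis by (simp add: RR_zero)
    qed
  qed
next
  case (insert k J')
  show ?case
  proof (intro allI impI)
    fix m b :: 'a and w :: "'b set \<Rightarrow> int"
    assume h: "\<forall>G. pfilter G \<longrightarrow> m \<in> G \<longrightarrow> b \<notin> G \<longrightarrow> (\<Sum>T\<in>Pow (insert k J'). w T * ee T (pat g G (insert k J'))) = 0"
    define d where "d = g k"
    have kJ: "k \<notin> J'" using insert.hyps by simp
    have finT: "finite (g ` T)" if "T \<in> Pow J'" for T
      using that insert.hyps(1) by (meson PowD finite_imageI finite_subset)
    have kT: "k \<notin> T" if "T \<in> Pow J'" for T using that kJ by auto
    have c1: "\<forall>G. pfilter G \<longrightarrow> m \<in> G \<longrightarrow> sup b d \<notin> G \<longrightarrow> (\<Sum>T\<in>Pow J'. w T * ee T (pat g G J')) = 0"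
    proof (intro allI impI)
      fix G :: "'a set" assume G: "pfilter G" "m \<in> G" "sup b d \<notin> G"
      have bG: "b \<notin> G" and dG: "d \<notin> G" using G pfilter_sup_iff[OF G(1)] by auto
      have pp: "pat g G (insert k J') = pat g G J'" using dG unfolding pat_def d_def by auto
      have kp: "k \<notin> pat g G J'" using kJ unfolding pat_def by auto
      have "0 = (\<Sum>T\<in>Pow (insert k J'). w T * ee T (pat g G (insert k J')))" using h G(1,2) bG by simp
      also have "\<dots> = (\<Sum>T\<in>Pow J'. w T * ee T (pat g G J')) + (\<Sum>T\<in>Pow J'. w (insert k T) * ee (insert k T) (pat g G J'))"
        unfolding pp by (rule sum_Pow_insert[OF insert.hyps(1) kJ])
      also have "(\<Sum>T\<in>Pow J'. w (insert k T) * ee (insert k T) (pat g G J')) = 0"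
        using kp by (simp add: ee_ins_notin)
      finally show "(\<Sum>T\<in>Pow J'. w T * ee T (pat g G J')) = 0" by simp
    qed
    have Z1: "(\<Sum>T\<in>Pow J'. frag_cmul (w T) (frag_of (mt m (g ` T)) - frag_of (mt (inf m (sup b d)) (g ` T)))) \<in> RR"
      by (rule insert.IH[THEN spec, THEN spec, THEN spec, THEN mp, OF c1])
    define w2 where "w2 T = w T + w (insert k T)" for T
    have c2: "\<forall>G. pfilter G \<longrightarrow> inf m d \<in> G \<longrightarrow> b \<notin> G \<longrightarrow> (\<Sum>T\<in>Pow J'. w2 T * ee T (pat g G J')) = 0"
    proof (intro allI impI)
      fix G :: "'a set" assume G: "pfilter G" "inf m d \<in> G" "b \<notin> G"
      have mG: "m \<in> G" and dG: "d \<in> G" using G pfilter_inf_iff[OF G(1)] by auto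
      have pp: "pat g G (insert k J') = insert k (pat g G J')" using dG unfolding pat_def d_def by auto
      have kp: "k \<notin> pat g G J'" using kJ unfolding pat_def by auto
      have e1: "ee T (insert k (pat g G J')) = ee T (pat g G J')" if "T \<in> Pow J'" for T
        using ee_remove[of k T "insert k (pat g G J')"] kT[OF that] kp by simp
      have e2: "ee (insert k T) (insert k (pat g G J')) = ee T (pat g G J')" if "T \<in> Pow J'" for T
        using ee_ins_ins[of k T "insert k (pat g G J')"] kT[OF that] kp by simp
      have "0 = (\<Sum>T\<in>Pow (insert k J'). w T * ee T (pat g G (insert k J')))" using h G(1) mG G(3) by simp
      also have "\<dots> = (\<Sum>T\<in>Pow J'. w T * ee T (insert k (pat g G J'))) + (\<Sum>T\<in>Pow J'. w (insert k T) * ee (insert k T) (insert k (pat g G J')))"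
        unfolding pp by (rule sum_Pow_insert[OF insert.hyps(1) kJ])
      also have "\<dots> = (\<Sum>T\<in>Pow J'. w T * ee T (pat g G J')) + (\<Sum>T\<in>Pow J'. w (insert k T) * ee T (pat g G J'))"
      proof -
        have "(\<Sum>T\<in>Pow J'. w T * ee T (insert k (pat g G J'))) = (\<Sum>T\<in>Pow J'. w T * ee T (pat g G J'))"
          by (rule sum.cong[OF refl]) (simp add: e1)
        moreover have "(\<Sum>T\<in>Pow J'. w (insert k T) * ee (insert k T) (insert k (pat g G J'))) = (\<Sum>T\<in>Pow J'. w (insert k T) * ee T (pat g G J'))"
          by (rule sum.cong[OF refl]) (simp add: e2)
        ultimately show ?thesis by simp
      qed
      also have "\<dots> = (\<Sum>T\<in>Pow J'. w2 T * ee T (pat g G J'))"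
        unfolding w2_def by (simp add: sum.distrib distrib_right)
      finally show "(\<Sum>T\<in>Pow J'. w2 T * ee T (pat g G J')) = 0" by simp
    qed
    have Z2: "(\<Sum>T\<in>Pow J'. frag_cmul (w2 T) (frag_of (mt (inf m d) (g ` T)) - frag_of (mt (inf (inf m d) b) (g ` T)))) \<in> RR"
      by (rule insert.IH[THEN spec, THEN spec, THEN spec, THEN mp, OF c2])
    define Q where "Q T = mt (inf m b) (g ` T)" for T
    define Rd where "Rd T = mt (inf m d) (g ` T)" for T
    define Z3 where "Z3 = (\<Sum>T\<in>Pow J'. frag_cmul (w T) (frag_of (Q T) + frag_of (Rd T) - frag_of (sup (Q T) (Rd T)) - frag_of (inf (Q T) (Rd T))))"
    have Z3: "Z3 \<in> RR" unfolding Z3_def by (intro RR_sum RR_cmul RR_rel)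
    have pt: "frag_cmul (w T) (frag_of (mt m (g ` T)) - frag_of (mt (inf m b) (g ` T)))
        + frag_cmul (w (insert k T)) (frag_of (mt m (g ` insert k T)) - frag_of (mt (inf m b) (g ` insert k T)))
      = frag_cmul (w T) (frag_of (mt m (g ` T)) - frag_of (mt (inf m (sup b d)) (g ` T)))
        + frag_cmul (w2 T) (frag_of (mt (inf m d) (g ` T)) - frag_of (mt (inf (inf m d) b) (g ` T)))
        - frag_cmul (w T) (frag_of (Q T) + frag_of (Rd T) - frag_of (sup (Q T) (Rd T)) - frag_of (inf (Q T) (Rd T)))"
      if T: "T \<in> Pow J'" for T
    proof -
      have f: "finite (g ` T)" by (rule finT[OF T])
      have a1: "mt m (g ` insert k T) = Rd T" unfolding Rd_def d_def using f by (simp add: mt_insert)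
      have a2: "mt (inf m b) (g ` insert k T) = mt (inf (inf m d) b) (g ` T)"
        unfolding d_def using f by (simp add: mt_insert inf_commute inf_left_commute)
      have a3: "mt (inf m (sup b d)) (g ` T) = sup (Q T) (Rd T)"
        unfolding Q_def Rd_def using f by (simp add: inf_sup_distrib1 mt_sup)
      have a4: "inf (Q T) (Rd T) = mt (inf (inf m d) b) (g ` T)"
        unfolding Q_def Rd_def using f mt_inf[OF f, of "inf m b" "inf m d", symmetric]
        by (simp add: inf_commute inf_left_commute inf_assoc)
      have a5: "mt (inf m b) (g ` T) = Q T" by (simp add: Q_def)
      have a6: "mt (inf m d) (g ` T) = Rd T" by (simp add: Rd_def)
      show ?thesis unfolding a1 a2 a3 a4 a5 a6 w2_def
        by (rule poly_eq_lookup) (simp add: lookup_add lookup_minus algebra_simps)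
    qed
    have "(\<Sum>T\<in>Pow (insert k J'). frag_cmul (w T) (frag_of (mt m (g ` T)) - frag_of (mt (inf m b) (g ` T))))
      = (\<Sum>T\<in>Pow J'. frag_cmul (w T) (frag_of (mt m (g ` T)) - frag_of (mt (inf m b) (g ` T))))
        + (\<Sum>T\<in>Pow J'. frag_cmul (w (insert k T)) (frag_of (mt m (g ` insert k T)) - frag_of (mt (inf m b) (g ` insert k T))))"
      by (rule sum_Pow_insert[OF insert.hyps(1) kJ])
    also have "\<dots> = (\<Sum>T\<in>Pow J'. frag_cmul (w T) (frag_of (mt m (g ` T)) - frag_of (mt (inf m b) (g ` T)))
        + frag_cmul (w (insert k T)) (frag_of (mt m (g ` insert k T)) - frag_of (mt (inf m b) (g ` insert k T))))"
      by (simp add: sum.distrib)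
    also have "\<dots> = (\<Sum>T\<in>Pow J'. frag_cmul (w T) (frag_of (mt m (g ` T)) - frag_of (mt (inf m (sup b d)) (g ` T)))
        + frag_cmul (w2 T) (frag_of (mt (inf m d) (g ` T)) - frag_of (mt (inf (inf m d) b) (g ` T)))
        - frag_cmul (w T) (frag_of (Q T) + frag_of (Rd T) - frag_of (sup (Q T) (Rd T)) - frag_of (inf (Q T) (Rd T))))"
      by (rule sum.cong[OF refl]) (rule pt)
    also have "\<dots> = (\<Sum>T\<in>Pow J'. frag_cmul (w T) (frag_of (mt m (g ` T)) - frag_of (mt (inf m (sup b d)) (g ` T))))
        + (\<Sum>T\<in>Pow J'. frag_cmul (w2 T) (frag_of (mt (inf m d) (g ` T)) - frag_of (mt (inf (inf m d) b) (g ` T)))) - Z3"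
      unfolding Z3_def by (simp add: sum.distrib sum_subtractf)
    finally show "(\<Sum>T\<in>Pow (insert k J'). frag_cmul (w T) (frag_of (mt m (g ` T)) - frag_of (mt (inf m b) (g ` T)))) \<in> RR"
      using Z1 Z2 Z3 by (simp add: RR_add RR_diff)
  qed
qed

lemma frag_cmul_diff2: "frag_cmul c (a - b) = frag_cmul c a - frag_cmul c b"
  by (rule poly_eq_lookup) (simp add: lookup_minus algebra_simps)

lemma sum_wsplit:
  fixes x y :: "'c \<Rightarrow> 'd::ab_group_add"
  assumes "finite A" "U \<in> A"
  shows "(\<Sum>T\<in>A. (if T = U then x T else 0) - (if T \<in> B then y T else 0)) = x U - (\<Sum>T\<in>A \<inter> B. y T)"
  using assms by (simp add: sum_subtractf sum.inter_restrict)

lemma lift_top: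
  fixes g :: "'b \<Rightarrow> 'a::{distrib_lattice,order_bot}"
  assumes J: "finite J" and h: "\<And>G. pfilter G \<Longrightarrow> (\<Sum>T\<in>Pow J - {{}}. w T * ee T (pat g G J)) = 0"
  shows "(\<Sum>T\<in>Pow J - {{}}. frag_cmul (w T) (frag_of (Inf_fin (g ` T)))) \<in> RR"
proof (cases "J = {}")
  case True
  then show ?thesis by (simp add: RR_zero)
next
  case False
  define t where "t = Sup_fin (g ` J)"
  define w' where "w' T = (if T = {} then 0 else w T)" for T
  have finP: "finite (Pow J)" using J by simp
  have dropE: "sum f (Pow J) = sum f (Pow J - {{}})" if "f {} = 0" for f :: "'b set \<Rightarrow> 'z::ab_group_add"
    using that finP by (simp add: sum_diff1)
  have cond: "\<forall>G. pfilter G \<longrightarrow> t \<in> G \<longrightarrow> bot \<notin> G \<longrightarrow> (\<Sum>T\<in>Pow J. w' T * ee T (pat g G J)) = 0"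
  proof (intro allI impI)
    fix G :: "'a set" assume G: "pfilter G"
    have "(\<Sum>T\<in>Pow J. w' T * ee T (pat g G J)) = (\<Sum>T\<in>Pow J - {{}}. w' T * ee T (pat g G J))"
      by (rule dropE) (simp add: w'_def)
    also have "\<dots> = (\<Sum>T\<in>Pow J - {{}}. w T * ee T (pat g G J))"
      by (rule sum.cong[OF refl]) (simp add: w'_def)
    finally show "(\<Sum>T\<in>Pow J. w' T * ee T (pat g G J)) = 0" using h[OF G] by simp
  qed
  have L: "(\<Sum>T\<in>Pow J. frag_cmul (w' T) (frag_of (mt t (g ` T)) - frag_of (mt (inf t bot) (g ` T)))) \<in> RR"
    by (rule lift[OF J, THEN spec, THEN spec, THEN spec, THEN mp, OF cond])
  have eqT: "mt t (g ` T) = Inf_fin (g ` T)" if T: "T \<in> Pow J - {{}}" for T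
  proof -
    have "T \<subseteq> J" "T \<noteq> {}" using T by auto
    then have fT: "finite (g ` T)" "g ` T \<noteq> {}" using J by (simp_all add: finite_subset)
    obtain j where j: "j \<in> T" using T by auto
    have "Inf_fin (g ` T) \<le> g j" using fT j by (intro Inf_fin.coboundedI) auto
    also have "g j \<le> t" unfolding t_def using J j T by (intro Sup_fin.coboundedI) auto
    finally have "Inf_fin (g ` T) \<le> t" .
    then show ?thesis using fT by (simp add: mt_eq inf_absorb2)
  qed
  have eqB: "mt (inf t bot) (g ` T) = bot" if T: "T \<in> Pow J" for T
  proof -
    have "T \<subseteq> J" using T by auto
    then have "finite (g ` T)" using J by (simp add: finite_subset)
    moreover have "inf t bot = bot" by (simp add: inf_absorb2)
    ultimately show ?thesis by (simp add: mt_bot)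
  qed
  have "(\<Sum>T\<in>Pow J. frag_cmul (w' T) (frag_of (mt t (g ` T)) - frag_of (mt (inf t bot) (g ` T))))
      = (\<Sum>T\<in>Pow J - {{}}. frag_cmul (w' T) (frag_of (mt t (g ` T)) - frag_of (mt (inf t bot) (g ` T))))"
    by (rule dropE) (simp add: w'_def)
  also have "\<dots> = (\<Sum>T\<in>Pow J - {{}}. frag_cmul (w T) (frag_of (Inf_fin (g ` T))) - frag_cmul (w T) (frag_of bot))"
    by (rule sum.cong[OF refl]) (simp add: w'_def eqT eqB frag_cmul_diff2)
  also have "\<dots> = (\<Sum>T\<in>Pow J - {{}}. frag_cmul (w T) (frag_of (Inf_fin (g ` T)))) - (\<Sum>T\<in>Pow J - {{}}. frag_cmul (w T) (frag_of bot))"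
    by (simp add: sum_subtractf)
  finally have "(\<Sum>T\<in>Pow J - {{}}. frag_cmul (w T) (frag_of (Inf_fin (g ` T))))
      = (\<Sum>T\<in>Pow J. frag_cmul (w' T) (frag_of (mt t (g ` T)) - frag_of (mt (inf t bot) (g ` T))))
        + (\<Sum>T\<in>Pow J - {{}}. frag_cmul (w T) (frag_of bot))" (is "?lhs = ?L + ?B") by simp
  moreover have "?B \<in> RR"
    by (intro RR_sum RR_cmul RR_bot)
  ultimately show ?thesis using RR_add[OF L] by simp
qed

lemma ev_mf:
  assumes G: "pfilter G" and T: "T \<subseteq> J" "T \<noteq> {}" "finite J"
  shows "ev G (frag_of (Inf_fin (g ` T))) = ee T (pat g G J)"
proof -
  have "finite (g ` T)" "g ` T \<noteq> {}" using T by (simp_all add: finite_subset)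
  then show ?thesis using Inf_fin_mem[OF G] T(1) by (simp add: ev_of ee_pat)
qed

lemma mpure:
  fixes g :: "'b::linorder \<Rightarrow> 'a::{distrib_lattice,order_bot}"
  assumes J: "finite J" and UJ: "U \<subseteq> J" and Une: "U \<noteq> {}" and n: "n \<noteq> 0"
    and hR: "frag_cmul n (frag_of (Inf_fin (g ` U))) - (\<Sum>T\<in>Ilt J U - {{}}. frag_cmul (c T) (frag_of (Inf_fin (g ` T)))) \<in> RR"
  shows "\<exists>c'. frag_of (Inf_fin (g ` U)) - (\<Sum>T\<in>Ilt J U - {{}}. frag_cmul (c' T) (frag_of (Inf_fin (g ` T)))) \<in> RR"
proof -
  define X where "X = insert {} {pat g G J | G. pfilter G}"
  define c0 where "c0 T = (if T = {} then 0 else c T)" for T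
  have XJ: "X \<subseteq> Pow J" unfolding X_def pat_def by auto
  have finI: "finite (Ilt J U)" using J unfolding Ilt_def by simp
  have IJ: "Ilt J U \<subseteq> Pow J" unfolding Ilt_def by auto
  have dropE: "sum f (Ilt J U) = sum f (Ilt J U - {{}}) + (if {} \<in> Ilt J U then f {} else 0)"
    for f :: "'b set \<Rightarrow> int"
    using finI by (simp add: sum_diff1)
  have eU0: "ee U {} = 0" using Une by (simp add: ee_def)
  have hX: "\<forall>S\<in>X. n * ee U S = (\<Sum>T\<in>Ilt J U. c0 T * ee T S)"
  proof
    fix S assume "S \<in> X"
    then consider "S = {}" | G where "pfilter G" "S = pat g G J" unfolding X_def by blast
    then show "n * ee U S = (\<Sum>T\<in>Ilt J U. c0 T * ee T S)"
    proof cases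
      case 1
      have "(\<Sum>T\<in>Ilt J U. c0 T * ee T S) = 0"
        by (rule sum.neutral) (auto simp: c0_def ee_def 1)
      then show ?thesis using eU0 1 by simp
    next
      case 2
      have "ev G (frag_cmul n (frag_of (Inf_fin (g ` U))) - (\<Sum>T\<in>Ilt J U - {{}}. frag_cmul (c T) (frag_of (Inf_fin (g ` T))))) = 0"
        by (rule ev_RR[OF 2(1) hR])
      then have "n * ee U S = (\<Sum>T\<in>Ilt J U - {{}}. c T * ev G (frag_of (Inf_fin (g ` T))))"
        using ev_mf[OF 2(1) UJ Une J] 2(2) by (simp add: ev_diff ev_cmul ev_sum)
      also have "\<dots> = (\<Sum>T\<in>Ilt J U - {{}}. c0 T * ee T S)"
      proof (rule sum.cong[OF refl])
        fix T assume "T \<in> Ilt J U - {{}}"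
        then have "T \<subseteq> J" "T \<noteq> {}" using IJ by auto
        then show "c T * ev G (frag_of (Inf_fin (g ` T))) = c0 T * ee T S"
          using ev_mf[OF 2(1) \<open>T \<subseteq> J\<close> \<open>T \<noteq> {}\<close> J] 2(2) by (simp add: c0_def)
      qed
      also have "\<dots> = (\<Sum>T\<in>Ilt J U. c0 T * ee T S)"
        using dropE[of "\<lambda>T. c0 T * ee T S"] by (simp add: c0_def)
      finally show ?thesis .
    qed
  qed
  obtain c' where c': "\<forall>S\<in>X. ee U S = (\<Sum>T\<in>Ilt J U. c' T * ee T S)"
    using purity[OF J, THEN spec, THEN spec, THEN spec, THEN spec, THEN spec, of X U n "ee U" c0] XJ UJ n hX by blast
  define E where "E = (if {} \<in> Ilt J U then c' {} else 0)"
  have c'': "ee U S = (\<Sum>T\<in>Ilt J U - {{}}. c' T * ee T S) + E" if "S \<in> X" for S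
    using c' that dropE[of "\<lambda>T. c' T * ee T S"] by (simp add: E_def ee_def)
  have "(\<Sum>T\<in>Ilt J U - {{}}. c' T * ee T {}) = 0"
    by (rule sum.neutral) (auto simp: ee_def)
  then have E0: "E = 0" using c''[of "{}"] eU0 unfolding X_def by simp
  define w where "w T = (if T = U then 1 else 0) - (if T \<in> Ilt J U then c' T else 0)" for T
  have A: "finite (Pow J - {{}})" "U \<in> Pow J - {{}}" using J UJ Une by auto
  have AI: "(Pow J - {{}}) \<inter> Ilt J U = Ilt J U - {{}}" using IJ by auto
  have cond: "(\<Sum>T\<in>Pow J - {{}}. w T * ee T (pat g G J)) = 0" if G: "pfilter G" for G
  proof -
    have "(\<Sum>T\<in>Pow J - {{}}. w T * ee T (pat g G J))
        = (\<Sum>T\<in>Pow J - {{}}. (if T = U then ee T (pat g G J) else 0) - (if T \<in> Ilt J U then c' T * ee T (pat g G J) else 0))"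
      by (rule sum.cong[OF refl]) (simp add: w_def left_diff_distrib)
    also have "\<dots> = ee U (pat g G J) - (\<Sum>T\<in>Ilt J U - {{}}. c' T * ee T (pat g G J))"
      using sum_wsplit[OF A, of "\<lambda>T. ee T (pat g G J)" "Ilt J U" "\<lambda>T. c' T * ee T (pat g G J)"] AI by simp
    also have "\<dots> = 0" using c''[of "pat g G J"] E0 G unfolding X_def by auto
    finally show ?thesis .
  qed
  have L: "(\<Sum>T\<in>Pow J - {{}}. frag_cmul (w T) (frag_of (Inf_fin (g ` T)))) \<in> RR"
    by (rule lift_top[OF J cond])
  have "(\<Sum>T\<in>Pow J - {{}}. frag_cmul (w T) (frag_of (Inf_fin (g ` T))))
      = (\<Sum>T\<in>Pow J - {{}}. (if T = U then frag_of (Inf_fin (g ` T)) else 0) - (if T \<in> Ilt J U then frag_cmul (c' T) (frag_of (Inf_fin (g ` T))) else 0))"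
    by (rule sum.cong[OF refl]) (simp add: w_def frag_cmul_diff_distrib)
  also have "\<dots> = frag_of (Inf_fin (g ` U)) - (\<Sum>T\<in>Ilt J U - {{}}. frag_cmul (c' T) (frag_of (Inf_fin (g ` T))))"
    using sum_wsplit[OF A, of "\<lambda>T. frag_of (Inf_fin (g ` T))" "Ilt J U" "\<lambda>T. frag_cmul (c' T) (frag_of (Inf_fin (g ` T)))"] AI by simp
  finally show ?thesis using L by auto
qed

definition mf :: "'a::{distrib_lattice,order_bot} wo set \<Rightarrow> 'a \<Rightarrow>\<^sub>0 int" where
  "mf T = frag_of (Inf_fin (Rep_wo ` T))"

definition good :: "'a::{distrib_lattice,order_bot} wo set \<Rightarrow> bool" where
  "good T \<longleftrightarrow> finite T \<and> T \<noteq> {} \<and>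
     \<not> (\<exists>J c. finite J \<and> mf T - (\<Sum>S\<in>Ilt J T - {{}}. frag_cmul (c S) (mf S)) \<in> RR)"

definition Lw :: "('a::{distrib_lattice,order_bot} wo set \<Rightarrow>\<^sub>0 int) \<Rightarrow> 'a \<Rightarrow>\<^sub>0 int" where
  "Lw w = frag_extend mf w"

definition Sp :: "('a::{distrib_lattice,order_bot} \<Rightarrow>\<^sub>0 int) \<Rightarrow> bool" where
  "Sp z \<longleftrightarrow> (\<exists>w. Poly_Mapping.keys w \<subseteq> {T. good T} \<and> z - Lw w \<in> RR)"

lemma Sp_zero: "Sp 0"
  unfolding Sp_def by (rule exI[of _ 0]) (simp add: Lw_def RR_zero)

lemma Sp_add: "Sp x \<Longrightarrow> Sp y \<Longrightarrow> Sp (x + y)"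
proof -
  assume "Sp x" "Sp y"
  then obtain w1 w2 where w: "Poly_Mapping.keys w1 \<subseteq> {T. good T}" "x - Lw w1 \<in> RR"
    "Poly_Mapping.keys w2 \<subseteq> {T. good T}" "y - Lw w2 \<in> RR" unfolding Sp_def by blast
  have "Poly_Mapping.keys (w1 + w2) \<subseteq> {T. good T}" using w(1,3) keys_add[of w1 w2] by blast
  moreover have "(x + y) - Lw (w1 + w2) = (x - Lw w1) + (y - Lw w2)"
    by (simp add: Lw_def frag_extend_add)
  ultimately show "Sp (x + y)" unfolding Sp_def using RR_add[OF w(2) w(4)] by metis
qed

lemma Sp_cmul: "Sp x \<Longrightarrow> Sp (frag_cmul c x)"
proof -
  assume "Sp x"
  then obtain w where w: "Poly_Mapping.keys w \<subseteq> {T. good T}" "x - Lw w \<in> RR" unfolding Sp_def by blast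
  have "Poly_Mapping.keys (frag_cmul c w) \<subseteq> {T. good T}" using w(1) keys_cmul[of c w] by blast
  moreover have "frag_cmul c x - Lw (frag_cmul c w) = frag_cmul c (x - Lw w)"
    by (simp add: Lw_def frag_extend_cmul frag_cmul_diff2)
  ultimately show ?thesis unfolding Sp_def using RR_cmul[OF w(2)] by metis
qed

lemma Sp_sum: "(\<And>i. i \<in> I \<Longrightarrow> Sp (f i)) \<Longrightarrow> Sp (sum f I)"
proof (induction I rule: infinite_finite_induct)
  case (infinite A) then show ?case by (simp add: Sp_zero)
next
  case empty then show ?case by (simp add: Sp_zero)
next
  case (insert x F) then show ?case by (simp add: Sp_add)
qed

lemma Sp_RR: "Sp z \<Longrightarrow> z' - z \<in> RR \<Longrightarrow> Sp z'"
proof -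
  assume "Sp z" and d: "z' - z \<in> RR"
  then obtain w where w: "Poly_Mapping.keys w \<subseteq> {T. good T}" "z - Lw w \<in> RR" unfolding Sp_def by blast
  have "z' - Lw w = (z' - z) + (z - Lw w)" by simp
  then have "z' - Lw w \<in> RR" using RR_add[OF d w(2)] by simp
  then show ?thesis using w(1) unfolding Sp_def by blast
qed

lemma Sp_mf: "finite T \<Longrightarrow> T \<noteq> {} \<Longrightarrow> Sp (mf T)"
proof (induction T rule: wf_induct_rule[OF wf_inv_image[OF wf_less_multiset, of mset_set]])
  case (1 T)
  show ?case
  proof (cases "good T")
    case True
    have "Poly_Mapping.keys (frag_of T) \<subseteq> {T. good T}" using True by (simp add: keys_frag_of)
    moreover have "mf T - Lw (frag_of T) = 0" by (simp add: Lw_def)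
    ultimately show ?thesis unfolding Sp_def using RR_zero by metis
  next
    case False
    then obtain J c where J: "finite J" and hc: "mf T - (\<Sum>S\<in>Ilt J T - {{}}. frag_cmul (c S) (mf S)) \<in> RR"
      using 1 unfolding good_def by blast
    have "Sp (\<Sum>S\<in>Ilt J T - {{}}. frag_cmul (c S) (mf S))"
    proof (rule Sp_sum, rule Sp_cmul)
      fix S assume S: "S \<in> Ilt J T - {{}}"
      then have "finite S" "S \<noteq> {}" "lexl S T" using J unfolding Ilt_def by (auto simp: finite_subset)
      then show "Sp (mf S)" using 1 by (simp add: lexl_def)
    qed
    then show ?thesis using hc Sp_RR by blast
  qed
qed

lemma Sp_all: "Sp z"
proof -
  have "z = frag_extend frag_of z" by (rule frag_expansion)
  also have "\<dots> = (\<Sum>i\<in>Poly_Mapping.keys z. frag_cmul (Poly_Mapping.lookup z i) (frag_of i))"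
    by (simp add: frag_extend_def)
  finally have z: "z = (\<Sum>i\<in>Poly_Mapping.keys z. frag_cmul (Poly_Mapping.lookup z i) (frag_of i))" .
  have "Sp (frag_of i)" for i :: 'a
  proof -
    have "frag_of i = mf {Abs_wo i}" by (simp add: mf_def Abs_wo_inverse)
    then show ?thesis using Sp_mf[of "{Abs_wo i}"] by simp
  qed
  then show ?thesis by (subst z) (intro Sp_sum Sp_cmul)
qed

lemma indep:
  fixes w :: "'a::{distrib_lattice,order_bot} wo set \<Rightarrow>\<^sub>0 int"
  assumes K: "Poly_Mapping.keys w \<subseteq> {T. good T}" and R: "Lw w \<in> RR"
  shows "w = 0"
proof (rule ccontr)
  assume "w \<noteq> 0"
  define K where "K = Poly_Mapping.keys w"
  have finK: "finite K" and neK: "K \<noteq> {}" using \<open>w \<noteq> 0\<close> unfolding K_def by auto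
  have goodK: "good T" if "T \<in> K" for T using K that unfolding K_def by blast
  have finT: "finite T" if "T \<in> K" for T using goodK[OF that] unfolding good_def by blast
  define M where "M = Max (mset_set ` K)"
  have "M \<in> mset_set ` K" unfolding M_def using finK neK by (intro Max_in) auto
  then obtain U where U: "U \<in> K" "mset_set U = M" by blast
  have maxU: "lexl S U" if "S \<in> K" "S \<noteq> U" for S
  proof -
    have "mset_set S \<le> M" unfolding M_def using finK that(1) by (intro Max_ge) auto
    moreover have "mset_set S \<noteq> mset_set U" using finT[OF that(1)] finT[OF U(1)] that(2) by simp
    ultimately show ?thesis using U(2) unfolding lexl_def by auto
  qed
  define J where "J = \<Union>K"
  have finJ: "finite J" unfolding J_def using finK finT by blast
  have UJ: "U \<subseteq> J" unfolding J_def using U by blast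
  have Une: "U \<noteq> {}" using goodK[OF U(1)] unfolding good_def by blast
  define n where "n = Poly_Mapping.lookup w U"
  have n: "n \<noteq> 0" using U(1) unfolding n_def K_def by (simp add: in_keys_iff)
  define c where "c S = (if S \<in> K then - Poly_Mapping.lookup w S else 0)" for S
  have IK: "(Ilt J U - {{}}) \<inter> K = K - {U}"
  proof
    show "(Ilt J U - {{}}) \<inter> K \<subseteq> K - {U}" unfolding Ilt_def by (auto simp: lexl_irrefl)
    show "K - {U} \<subseteq> (Ilt J U - {{}}) \<inter> K"
    proof
      fix S assume S: "S \<in> K - {U}"
      then have "S \<subseteq> J" "S \<noteq> {}" "lexl S U" using maxU goodK unfolding J_def good_def by auto
      then show "S \<in> (Ilt J U - {{}}) \<inter> K" using S unfolding Ilt_def by auto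
    qed
  qed
  have finI: "finite (Ilt J U - {{}})" using finJ unfolding Ilt_def by simp
  have "Lw w = (\<Sum>T\<in>K. frag_cmul (Poly_Mapping.lookup w T) (mf T))"
    unfolding Lw_def frag_extend_def K_def ..
  also have "\<dots> = frag_cmul n (mf U) + (\<Sum>T\<in>K - {U}. frag_cmul (Poly_Mapping.lookup w T) (mf T))"
    unfolding n_def using finK U(1) by (simp add: sum.remove)
  also have "(\<Sum>T\<in>K - {U}. frag_cmul (Poly_Mapping.lookup w T) (mf T))
      = - (\<Sum>S\<in>Ilt J U - {{}}. frag_cmul (c S) (mf S))"
  proof -
    have "(\<Sum>S\<in>Ilt J U - {{}}. frag_cmul (c S) (mf S))
        = (\<Sum>S\<in>Ilt J U - {{}}. if S \<in> K then frag_cmul (- Poly_Mapping.lookup w S) (mf S) else 0)"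
      by (rule sum.cong[OF refl]) (simp add: c_def)
    also have "\<dots> = (\<Sum>S\<in>(Ilt J U - {{}}) \<inter> K. frag_cmul (- Poly_Mapping.lookup w S) (mf S))"
      using finI by (simp add: sum.inter_restrict)
    also have "\<dots> = - (\<Sum>T\<in>K - {U}. frag_cmul (Poly_Mapping.lookup w T) (mf T))"
      unfolding IK by (simp add: sum_negf[symmetric])
    finally show ?thesis by simp
  qed
  finally have "Lw w = frag_cmul n (mf U) - (\<Sum>S\<in>Ilt J U - {{}}. frag_cmul (c S) (mf S))" by simp
  then have "frag_cmul n (frag_of (Inf_fin (Rep_wo ` U))) - (\<Sum>S\<in>Ilt J U - {{}}. frag_cmul (c S) (frag_of (Inf_fin (Rep_wo ` S))))  \<in> RR"
    using R unfolding mf_def by simp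
  from mpure[OF finJ UJ Une n this] obtain c' where
    "frag_of (Inf_fin (Rep_wo ` U)) - (\<Sum>S\<in>Ilt J U - {{}}. frag_cmul (c' S) (frag_of (Inf_fin (Rep_wo ` S)))) \<in> RR"
    by blast
  then have "\<not> good U" using finJ unfolding good_def mf_def by blast
  then show False using goodK[OF U(1)] by blast
qed

lemma RR_normal: "RR \<lhd> (FA::('a::{distrib_lattice,order_bot} \<Rightarrow>\<^sub>0 int) monoid)"
  by (rule comm_group.subgroup_imp_normal[OF abelian_free_Abelian_group RR_subgroup])

lemma mom_eq: "(module_of_motives :: ('a::{distrib_lattice,order_bot} \<Rightarrow>\<^sub>0 int) set monoid) = FA Mod RR"
  unfolding module_of_motives_def RR_def ..

definition phi :: "('a::{distrib_lattice,order_bot} wo set \<Rightarrow>\<^sub>0 int) \<Rightarrow> ('a \<Rightarrow>\<^sub>0 int) set" where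
  "phi w = RR #>\<^bsub>FA\<^esub> Lw w"

lemma phi_iso: "phi \<in> iso (free_Abelian_group {T::'a wo set. good T}) ((FA::('a::{distrib_lattice,order_bot} \<Rightarrow>\<^sub>0 int) monoid) Mod RR)"
proof -
  interpret N: normal RR "FA::('a \<Rightarrow>\<^sub>0 int) monoid" by (rule RR_normal)
  have carr: "phi w \<in> carrier ((FA::('a \<Rightarrow>\<^sub>0 int) monoid) Mod RR)" for w :: "'a wo set \<Rightarrow>\<^sub>0 int"
    unfolding phi_def carrier_FactGroup by auto
  have hom: "phi \<in> hom (free_Abelian_group {T::'a wo set. good T}) ((FA::('a \<Rightarrow>\<^sub>0 int) monoid) Mod RR)"
  proof (rule homI)
    fix x y :: "'a wo set \<Rightarrow>\<^sub>0 int"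
    show "phi x \<in> carrier ((FA::('a \<Rightarrow>\<^sub>0 int) monoid) Mod RR)" by (rule carr)
    show "phi (x \<otimes>\<^bsub>free_Abelian_group {T::'a wo set. good T}\<^esub> y) = phi x \<otimes>\<^bsub>FA Mod RR\<^esub> phi y"
      unfolding phi_def using N.rcos_sum[of "Lw x" "Lw y"] by (simp add: Lw_def frag_extend_add)
  qed
  have inj: "inj_on phi (carrier (free_Abelian_group {T::'a wo set. good T}))"
    unfolding inj_on_def
  proof (intro ballI impI)
    fix x y :: "'a wo set \<Rightarrow>\<^sub>0 int"
    assume x: "x \<in> carrier (free_Abelian_group {T::'a wo set. good T})" and y: "y \<in> carrier (free_Abelian_group {T::'a wo set. good T})"
      and e: "phi x = phi y"
    have "Lw x \<in> RR #>\<^bsub>FA\<^esub> Lw x" by (rule group.rcos_self[OF group_free_Abelian_group]) (simp_all add: RR_subgroup)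
    then have "Lw x \<in> RR #>\<^bsub>FA\<^esub> Lw y" using e unfolding phi_def by simp
    then have "Lw x \<otimes>\<^bsub>FA\<^esub> inv\<^bsub>FA\<^esub> Lw y \<in> RR"
      by (intro subgroup.rcos_module_imp[OF RR_subgroup group_free_Abelian_group]) simp_all
    then have "Lw (x - y) \<in> RR" by (simp add: Lw_def frag_extend_diff)
    moreover have "Poly_Mapping.keys (x - y) \<subseteq> {T::'a wo set. good T}"
      using x y keys_diff[of x y] by auto
    ultimately have "x - y = 0" using indep by blast
    then show "x = y" by simp
  qed
  have surj: "phi ` carrier (free_Abelian_group {T::'a wo set. good T}) = carrier ((FA::('a \<Rightarrow>\<^sub>0 int) monoid) Mod RR)"
  proof
    show "phi ` carrier (free_Abelian_group {T::'a wo set. good T}) \<subseteq> carrier ((FA::('a \<Rightarrow>\<^sub>0 int) monoid) Mod RR)" using carr by blast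
    show "carrier ((FA::('a \<Rightarrow>\<^sub>0 int) monoid) Mod RR) \<subseteq> phi ` carrier (free_Abelian_group {T::'a wo set. good T})"
    proof
      fix X assume "X \<in> carrier ((FA::('a \<Rightarrow>\<^sub>0 int) monoid) Mod RR)"
      then obtain z :: "'a \<Rightarrow>\<^sub>0 int" where z: "X = RR #>\<^bsub>FA\<^esub> z" unfolding carrier_FactGroup by auto
      obtain w where w: "Poly_Mapping.keys w \<subseteq> {T::'a wo set. good T}" "z - Lw w \<in> RR"
        using Sp_all[of z] unfolding Sp_def by blast
      have "z \<otimes>\<^bsub>FA\<^esub> inv\<^bsub>FA\<^esub> Lw w \<in> RR" using w(2) by simp
      then have "z \<in> RR #>\<^bsub>FA\<^esub> Lw w"
        by (intro subgroup.rcos_module_rev[OF RR_subgroup group_free_Abelian_group]) simp_all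
      then have "RR #>\<^bsub>FA\<^esub> Lw w = RR #>\<^bsub>FA\<^esub> z"
        by (intro group.repr_independence[OF group_free_Abelian_group]) (simp_all add: RR_subgroup)
      then have "X = phi w" unfolding z phi_def by simp
      moreover have "w \<in> carrier (free_Abelian_group {T::'a wo set. good T})" using w(1) by simp
      ultimately show "X \<in> phi ` carrier (free_Abelian_group {T::'a wo set. good T})" by blast
    qed
  qed
  show ?thesis unfolding iso_def bij_betw_def using hom inj surj by blast
qed

theorem corollary3p37:
  shows "free_abelian (module_of_motives :: ('a::{distrib_lattice,order_bot} \<Rightarrow>\<^sub>0 int) set monoid)"
proof -
  let ?M = "(FA::('a \<Rightarrow>\<^sub>0 int) monoid) Mod RR"
  let ?Gd = "{T::'a wo set. good T}"
  have cg: "comm_group ?M"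
    by (rule comm_group.abelian_FactGroup[OF abelian_free_Abelian_group RR_subgroup])
  have i1: "free_Abelian_group ?Gd \<cong> ?M" by (rule is_isoI[OF phi_iso])
  then have i2: "?M \<cong> free_Abelian_group ?Gd"
    by (rule group.iso_sym[OF group_free_Abelian_group])
  define B where "B = (\<lambda>T. phi (frag_of T)) ` ?Gd"
  have BM: "B \<subseteq> carrier ?M"
    unfolding B_def phi_def carrier_FactGroup by auto
  have injB: "inj_on (\<lambda>T. phi (frag_of T)) ?Gd"
  proof (rule inj_onI)
    fix S T assume S: "S \<in> ?Gd" and T: "T \<in> ?Gd" and e: "phi (frag_of S) = phi (frag_of T)"
    have "inj_on phi (carrier (free_Abelian_group ?Gd))"
      using phi_iso unfolding iso_def bij_betw_def by blast
    moreover have "frag_of S \<in> carrier (free_Abelian_group ?Gd)" "frag_of T \<in> carrier (free_Abelian_group ?Gd)"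
      using S T by simp_all
    ultimately have "frag_of S = frag_of T" using e by (meson inj_onD)
    then show "S = T" by (simp add: frag_of_eq)
  qed
  have "B \<approx> ?Gd" unfolding B_def by (rule inj_on_image_eqpoll_self[OF injB])
  then have "free_Abelian_group ?Gd \<cong> free_Abelian_group B"
    using isomorphic_free_Abelian_groups eqpoll_sym by blast
  then have "?M \<cong> free_Abelian_group B" using i2 iso_trans by blast
  then show ?thesis unfolding free_abelian_def mom_eq using cg BM by blast
qed

end
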